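(* Consider the faulty-starter delivery problem described in the context, with finisher starting position $(x,y)$, $y\ge0$, and $(x,y)\notin D(1,1)$. Then for every $a\in[0,1]$ and every algorithm $\mathcal{A}_a$ of the class described in the context, either $\mathrm{CR}_{\mathcal{A}_1}\le\mathrm{CR}_{\mathcal{A}_a}$ or $\mathrm{CR}_{\mathcal{A}_0}\le\mathrm{CR}_{\mathcal{A}_a}$.
   Context: Setting. In the plane let $S=(0,0)$ and $T=(1,0)$. A "starter" drone carrying a package starts at $S$ at time $0$ and moves at unit speed along $\overline{ST}$ towards $T$. At an unknown time $t\in[0,1]$ it fails and stays forever at $(t,0)$ with the package (at time $s$ the package is at $(\min\{s,t\},0)$). A "finisher" drone starts at time $0$ at $P=(x,y)$ with $y\ge0$, moves at unit speed and can stop and turn instantaneously. The package can be handed over only when the drones are co-located; it is delivered at the first time the finisher, carrying the package, is at $T$. An online algorithm $\mathcal{A}$ specifies the finisher's trajectory using only $(x,y)$; $A(t)$ is its delivery time for fail time $t$. $\mathrm{Opt}(t)=\max\{1,\sqrt{(x-t)^2+y^2}+1-t\}$ is the optimal offline delivery time. $\mathrm{CR}_{\mathcal{A}}(t)=A(t)/\mathrm{Opt}(t)$ and $\mathrm{CR}_{\mathcal{A}}=\sup_{0\le t\le1}\mathrm{CR}_{\mathcal{A}}(t)$. $D(c,r)$ denotes the open disk of radius $r$ centered at $(c,0)$. Algorithms. $\mathcal{A}_0$: the finisher goes straight to $S$, then along $\overline{ST}$ towards $T$ until it finds the package, then on to $T$. $\mathcal{A}_1$: the finisher goes straight to $T$,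 then along the segment towards $S$ until it finds the package, then returns to $T$. For $a\in[0,1]$, an algorithm $\mathcal{A}_a$ is any online algorithm in which the finisher moves from $P$ along a straight line to $(a,0)$ and afterwards remains within $\overline{ST}$ until it picks up the package, after which it goes to $T$. *)

theory Defs
  imports "HOL-Analysis.Analysis"
begin

text \<open>Points of the plane are pairs of reals; the product norm is Euclidean.
  S = (0,0), T = (1,0).\<close>

definition ptS :: "real \<times> real" where "ptS = (0, 0)"
definition ptT :: "real \<times> real" where "ptT = (1, 0)"

definition D :: "real \<Rightarrow> real \<Rightarrow> (real \<times> real) set" where
  "D c r = ball (c, 0) r"

text \<open>Position of the package at time s when the starter fails at time t.\<close>
definition pkg :: "real \<Rightarrow> real \<Rightarrow> real \<times> real" where
  "pkg t s = (min s t, 0)"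

text \<open>A search trajectory g (the finisher's position at time s before it holds
  the package, which depends only on the start point).\<close>
definition meet_times :: "(real \<Rightarrow> real \<times> real) \<Rightarrow> real \<Rightarrow> real set" where
  "meet_times g t = {s. 0 \<le> s \<and> g s = pkg t s}"

definition delivery :: "(real \<Rightarrow> real \<times> real) \<Rightarrow> real \<Rightarrow> ereal" where
  "delivery g t =
     (if meet_times g t = {} then \<infinity>
      else ereal (Inf (meet_times g t) + dist (g (Inf (meet_times g t))) ptT))"

definition Opt :: "real \<Rightarrow> real \<Rightarrow> real \<Rightarrow> real" where
  "Opt x y t = max 1 (sqrt ((x - t)\<^sup>2 + y\<^sup>2) + 1 - t)"

definition CR :: "real \<Rightarrow> real \<Rightarrow> (real \<Rightarrow> real \<times> real) \<Rightarrow> ereal" where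
  "CR x y g = (SUP t\<in>{0..1}. delivery g t / ereal (Opt x y t))"

definition line :: "real \<times> real \<Rightarrow> real \<times> real \<Rightarrow> real \<Rightarrow> real \<times> real" where
  "line p q s = p + (min s (dist p q) / dist p q) *\<^sub>R (q - p)"

definition trajA0 :: "real \<Rightarrow> real \<Rightarrow> real \<Rightarrow> real \<times> real" where
  "trajA0 x y s = (let d = dist (x, y) ptS in
     if s \<le> d then line (x, y) ptS s else (min (s - d) 1, 0))"

definition trajA1 :: "real \<Rightarrow> real \<Rightarrow> real \<Rightarrow> real \<times> real" where
  "trajA1 x y s = (let d = dist (x, y) ptT in
     if s \<le> d then line (x, y) ptT s else (max (1 - (s - d)) 0, 0))"

definition alg_class :: "real \<Rightarrow> real \<Rightarrow> real \<Rightarrow> (real \<Rightarrow> real \<times> real) \<Rightarrow> bool" where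
  "alg_class x y a g \<longleftrightarrow>
     (\<forall>s1 s2. 0 \<le> s1 \<longrightarrow> 0 \<le> s2 \<longrightarrow> dist (g s1) (g s2) \<le> \<bar>s1 - s2\<bar>) \<and>
     (\<forall>s. 0 \<le> s \<and> s \<le> dist (x, y) (a, 0) \<longrightarrow> g s = line (x, y) (a, 0) s) \<and>
     (\<forall>s. dist (x, y) (a, 0) \<le> s \<longrightarrow> g s \<in> closed_segment ptS ptT)"

end

theory Submission
  imports Defs
begin


lemma dist_pair: "dist (a::real, b::real) (c, d) = sqrt ((a-c)^2 + (b-d)^2)"
  by (simp add: dist_Pair_Pair dist_real_def)

lemma line_0: "line p q 0 = p"
  by (simp add: line_def)

lemma line_end: "line p q (dist p q) = q"
  by (cases "p = q") (auto simp: line_def)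

lemma line_cont: "continuous_on A (line p q)"
proof (cases "p = q")
  case True
  then have "line p q = (\<lambda>s. p)" by (auto simp: line_def)
  then show ?thesis by simp
next
  case False
  then show ?thesis unfolding line_def by (intro continuous_intros) auto
qed

lemma lip_cont:
  assumes "\<forall>s1 s2. 0 \<le> s1 \<longrightarrow> 0 \<le> s2 \<longrightarrow> dist (g s1) (g s2) \<le> \<bar>s1 - s2\<bar>"
  shows "continuous_on {0..} g"
  unfolding continuous_on_iff
proof (intro ballI allI impI)
  fix s e :: real assume s: "s \<in> {0..}" and e: "0 < e"
  show "\<exists>d>0. \<forall>s'\<in>{0..}. dist s' s < d \<longrightarrow> dist (g s') (g s) < e"
  proof (intro exI[of _ e] conjI ballI impI)
    fix s' :: real assume "s' \<in> {0..}" "dist s' s < e"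
    then show "dist (g s') (g s) < e" using assms s
      by (metis atLeast_iff dist_real_def order.strict_trans1)
  qed (rule e)
qed

lemma meet_closed:
  assumes "continuous_on {0..} g"
  shows "closed (meet_times g t)"
proof -
  have "meet_times g t = {0..} \<inter> (\<lambda>s. g s - pkg t s) -` {0}"
    by (auto simp: meet_times_def)
  moreover have "continuous_on {0..} (\<lambda>s. g s - pkg t s)"
    unfolding pkg_def by (intro continuous_intros assms)
  ultimately show ?thesis
    by (metis closed_atLeast closed_singleton continuous_closed_preimage)
qed

lemma meet_Inf:
  assumes "continuous_on {0..} g" "meet_times g t \<noteq> {}"
  shows "Inf (meet_times g t) \<in> meet_times g t"
    "\<And>s. s \<in> meet_times g t \<Longrightarrow> Inf (meet_times g t) \<le> s"
proof -
  have bb: "bdd_below (meet_times g t)"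
    by (rule bdd_belowI[of _ 0]) (auto simp: meet_times_def)
  show "Inf (meet_times g t) \<in> meet_times g t"
    using closed_contains_Inf[OF assms(2) bb meet_closed[OF assms(1)]] .
  show "\<And>s. s \<in> meet_times g t \<Longrightarrow> Inf (meet_times g t) \<le> s"
    using bb by (simp add: cInf_lower)
qed

lemma pkg_dist: "t \<le> 1 \<Longrightarrow> dist (pkg t s) ptT = 1 - min s t"
  by (auto simp: pkg_def ptT_def dist_pair)

lemma delivery_eq:
  assumes "continuous_on {0..} g" "meet_times g t \<noteq> {}" "t \<le> 1"
  shows "delivery g t = ereal (Inf (meet_times g t) + 1 - min (Inf (meet_times g t)) t)"
proof -
  have "Inf (meet_times g t) \<in> meet_times g t" using meet_Inf assms by blast
  then have "g (Inf (meet_times g t)) = pkg t (Inf (meet_times g t))" by (simp add: meet_times_def)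
  then show ?thesis using assms pkg_dist by (simp add: delivery_def)
qed

lemma delivery_le:
  assumes "continuous_on {0..} g" "s \<in> meet_times g t" "t \<le> 1"
  shows "delivery g t \<le> ereal (s + 1 - min s t)"
proof -
  have ne: "meet_times g t \<noteq> {}" using assms by blast
  have "Inf (meet_times g t) \<le> s" using meet_Inf(2)[OF assms(1) ne assms(2)] .
  then show ?thesis using delivery_eq[OF assms(1) ne assms(3)]
    by (auto simp: min_def)
qed

lemma delivery_ge:
  assumes "continuous_on {0..} g" "t \<le> 1"
    and "\<And>s. s \<in> meet_times g t \<Longrightarrow> B \<le> s + 1 - min s t"
  shows "ereal B \<le> delivery g t"
proof (cases "meet_times g t = {}")
  case True then show ?thesis by (simp add: delivery_def)
next
  case False
  then show ?thesis using delivery_eq[OF assms(1) False assms(2)] meet_Inf(1)[OF assms(1) False] assms(3)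
    by auto
qed

lemma ratio_ge: "0 < Q \<Longrightarrow> ereal B \<le> Z \<Longrightarrow> ereal (B / Q) \<le> Z / ereal Q"
  using ereal_divide_right_mono[of "ereal B" Z "ereal Q"] by simp

lemma ratio_le: "0 < Q \<Longrightarrow> Z \<le> ereal B \<Longrightarrow> Z / ereal Q \<le> ereal (B / Q)"
  using ereal_divide_right_mono[of Z "ereal B" "ereal Q"] by simp

lemma CR_ge: "t \<in> {0..1} \<Longrightarrow> delivery g t / ereal (Opt x y t) \<le> CR x y g"
  unfolding CR_def by (rule SUP_upper)

lemma CR_le: "(\<And>t. t \<in> {0..1} \<Longrightarrow> delivery g t / ereal (Opt x y t) \<le> B) \<Longrightarrow> CR x y g \<le> B"
  unfolding CR_def by (rule SUP_least)

lemma trajA1_cont: "continuous_on {0..} (trajA1 x y)"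
proof -
  let ?d = "dist (x, y) ptT"
  have "continuous_on {0..} (\<lambda>s. if s \<le> ?d then line (x, y) ptT s else (max (1 - (s - ?d)) 0, 0))"
    by (rule continuous_on_cases_le) (auto intro!: continuous_intros line_cont simp: line_end ptT_def)
  then show ?thesis unfolding trajA1_def Let_def .
qed

lemma trajA0_cont: "continuous_on {0..} (trajA0 x y)"
proof -
  let ?d = "dist (x, y) ptS"
  have "continuous_on {0..} (\<lambda>s. if s \<le> ?d then line (x, y) ptS s else (min (s - ?d) 1, 0))"
    by (rule continuous_on_cases_le) (auto intro!: continuous_intros line_cont simp: line_end ptS_def)
  then show ?thesis unfolding trajA0_def Let_def .
qed



lemma far_sq: "1 \<le> dist (x::real, y::real) (1, 0) \<Longrightarrow> 1 \<le> (x-1)^2 + y^2"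
  by (metis dist_pair diff_zero real_sqrt_le_iff real_sqrt_one)

lemma dist_axis: "dist (a::real, 0::real) (b, 0) = \<bar>a - b\<bar>"
  by (simp add: dist_pair)

lemma near_S:
  fixes x y s :: real
  assumes "1 \<le> (x-1)^2 + y^2" "0 \<le> s" "s < 1" "dist (x, y) (s, 0) \<le> s"
  shows "x = 0 \<and> y = 0"
proof -
  have "sqrt ((x-s)^2 + y^2) \<le> s" using assms(4) by (simp add: dist_pair)
  then have h: "(x-s)^2 + y^2 \<le> s^2"
    by (metis assms(2) real_sqrt_le_iff real_sqrt_pow2_iff real_sqrt_unique zero_le_power2 add_nonneg_nonneg)
  then have h1: "x^2 + y^2 \<le> 2 * x * s" by (simp add: power2_eq_square algebra_simps)
  have h2: "2*x \<le> x^2 + y^2" using assms(1) by (simp add: power2_eq_square algebra_simps)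
  have "x * (1 - s) \<le> 0" using h1 h2 by (simp add: algebra_simps)
  then have x0: "x \<le> 0" using assms(3) by (simp add: mult_le_0_iff)
  have "x * s \<le> 0" using x0 assms(2) by (simp add: mult_nonpos_nonneg)
  then have "x^2 + y^2 \<le> 0" using h1 by linarith
  then show ?thesis by (simp add: sum_power2_le_zero_iff)
qed

lemma poly:
  fixes x y c t :: real
  assumes far: "1 \<le> (x-1)^2 + y^2" and "0 \<le> c" "c \<le> t" "t \<le> 1"
  shows "(1 - t) * dist (x, y) (c, 0) \<le> (1 - c) * dist (x, y) (t, 0)"
proof -
  define X where "X = 1 - x"
  have far': "1 \<le> X^2 + y^2" using far by (simp add: X_def power2_commute)
  have id: "(1-c)^2*((x-t)^2+y^2) - (1-t)^2*((x-c)^2+y^2)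
      = (t-c)*((2-c-t)*(X^2+y^2) - 2*(1-c)*(1-t)*X)"
    by (simp add: X_def power2_eq_square algebra_simps)
  have ab: "2*(1-c)*(1-t) \<le> 2-c-t"
  proof -
    have "(1-c)*(1-t) \<le> (1-c)" using assms by (simp add: mult_left_le)
    moreover have "(1-c)*(1-t) \<le> (1-t)" using assms by (intro mult_left_le_one_le) auto
    ultimately show ?thesis by linarith
  qed
  have "2*(1-c)*(1-t)*X \<le> (2-c-t)*(X^2+y^2)"
  proof (cases "X \<le> 0")
    case True
    have "0 \<le> 2*(1-c)*(1-t)" using assms by simp
    then have "2*(1-c)*(1-t)*X \<le> 0" using True by (simp add: mult_nonneg_nonpos)
    moreover have "0 \<le> (2-c-t)*(X^2+y^2)" using assms by simp
    ultimately show ?thesis by linarith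
  next
    case False
    have XX: "X \<le> X^2 + y^2"
    proof (cases "X \<le> 1")
      case True then show ?thesis using far' by linarith
    next
      case False
      then have "X \<le> X * X" by (simp add: mult_le_cancel_left1)
      then show ?thesis by (simp add: power2_eq_square) (smt (verit) zero_le_power2 power2_eq_square)
    qed
    have "2*(1-c)*(1-t)*X \<le> (2-c-t)*X" using ab False by (simp add: mult_right_mono)
    also have "\<dots> \<le> (2-c-t)*(X^2+y^2)" using XX assms by (simp add: mult_left_mono)
    finally show ?thesis .
  qed
  then have "0 \<le> (1-c)^2*((x-t)^2+y^2) - (1-t)^2*((x-c)^2+y^2)"
    unfolding id using assms by simp
  then have sq: "((1 - t) * dist (x, y) (c, 0))^2 \<le> ((1 - c) * dist (x, y) (t, 0))^2"
    by (simp add: dist_pair power_mult_distrib)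
  show ?thesis
    by (rule power2_le_imp_le[OF sq]) (use assms in simp)
qed



lemma A0_bound:
  fixes x y t :: real
  assumes "0 \<le> t" "t \<le> 1"
  shows "delivery (trajA0 x y) t \<le> ereal (dist (x, y) (0, 0) + 1)"
proof -
  define d where "d = dist (x, y) (0::real, 0::real)"
  have d0: "0 \<le> d" by (simp add: d_def)
  have tr: "trajA0 x y (d + t) = (t, 0)"
  proof (cases "t = 0")
    case True
    then show ?thesis using line_end[of "(x, y)" ptS]
      by (simp add: trajA0_def Let_def d_def ptS_def)
  next
    case False
    then show ?thesis using assms by (simp add: trajA0_def Let_def d_def ptS_def)
  qed
  have "d + t \<in> meet_times (trajA0 x y) t"
    using tr d0 assms by (simp add: meet_times_def pkg_def)
  from delivery_le[OF trajA0_cont this assms(2)] d0 show ?thesis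
    by (simp add: d_def)
qed

lemma A1_bound:
  fixes x y t :: real
  assumes "0 \<le> t" "t \<le> 1" "1 \<le> dist (x, y) (1, 0)"
  shows "delivery (trajA1 x y) t \<le> ereal (dist (x, y) (1, 0) + 2 - 2 * t)"
proof -
  define d where "d = dist (x, y) (1::real, 0::real)"
  have tr: "trajA1 x y (d + 1 - t) = (t, 0)"
  proof (cases "t = 1")
    case True
    then show ?thesis using line_end[of "(x, y)" ptT]
      by (simp add: trajA1_def Let_def d_def ptT_def)
  next
    case False
    then show ?thesis using assms by (simp add: trajA1_def Let_def d_def ptT_def)
  qed
  have "d + 1 - t \<in> meet_times (trajA1 x y) t"
    using tr assms by (simp add: meet_times_def pkg_def d_def)
  have m: "min (d + 1 - t) t = t" using assms by (simp add: d_def)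
  have "delivery (trajA1 x y) t \<le> ereal (d + 1 - t + 1 - min (d + 1 - t) t)"
    by (rule delivery_le[OF trajA1_cont \<open>d + 1 - t \<in> meet_times (trajA1 x y) t\<close> assms(2)])
  also have "d + 1 - t + 1 - min (d + 1 - t) t = d + 2 - 2 * t" using m by linarith
  finally show ?thesis by (simp add: d_def)
qed



theorem lemma4:
  fixes x y a :: real and g :: "real \<Rightarrow> real \<times> real"
  assumes "0 \<le> y" and "(x, y) \<notin> D 1 1"
    and "0 \<le> a" and "a \<le> 1"
    and "alg_class x y a g"
  shows "CR x y (trajA1 x y) \<le> CR x y g \<or> CR x y (trajA0 x y) \<le> CR x y g"
proof -
  have lip: "\<forall>s1 s2. 0 \<le> s1 \<longrightarrow> 0 \<le> s2 \<longrightarrow> dist (g s1) (g s2) \<le> \<bar>s1 - s2\<bar>"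
    using assms(5) by (simp add: alg_class_def)
  have lipd: "\<And>s1 s2. 0 \<le> s1 \<Longrightarrow> 0 \<le> s2 \<Longrightarrow> dist (g s1) (g s2) \<le> \<bar>s1 - s2\<bar>"
    using lip by blast
  have "\<forall>s. 0 \<le> s \<and> s \<le> dist (x, y) (a, 0) \<longrightarrow> g s = line (x, y) (a, 0) s"
    using assms(5) by (simp add: alg_class_def)
  then have "g 0 = line (x, y) (a, 0) 0" by simp
  then have g0: "g 0 = (x, y)" by (simp add: line_0)
  have gc: "continuous_on {0..} g" using lip_cont[OF lip] .
  have far: "1 \<le> dist (x, y) (1, 0)"
    using assms(2) by (simp add: D_def mem_ball dist_commute)
  have far2: "1 \<le> (x-1)^2 + y^2" using far_sq[OF far] .
  define e where "e t = dist (x, y) (t, 0::real)" for t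
  have tri: "e 1 \<le> e t + 1 - t" if "0 \<le> t" "t \<le> 1" for t
  proof -
    have "dist (x, y) (1::real, 0::real) \<le> dist (x, y) (t, 0) + dist (t, 0::real) (1, 0)"
      by (rule dist_triangle)
    then show ?thesis using that by (simp add: e_def dist_axis)
  qed
  have e1: "1 \<le> e 1" using far by (simp add: e_def)
  have Opt: "Opt x y t = e t + 1 - t" if "0 \<le> t" "t \<le> 1" for t
  proof -
    have s: "sqrt ((x - t)^2 + y^2) = e t" by (simp add: e_def dist_pair)
    have "1 \<le> e t + 1 - t" using tri[OF that] e1 by linarith
    then show ?thesis unfolding Opt_def s by (simp add: max_absorb2)
  qed
  have Optpos: "0 < Opt x y t" if "0 \<le> t" "t \<le> 1" for t
    using tri[OF that] e1 Opt[OF that] by linarith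
  show ?thesis
  proof (cases "meet_times g 0 = {} \<or> meet_times g 1 = {}")
    case True
    have "\<exists>t::real. t \<in> {0..1} \<and> meet_times g t = {}"
      using True by (metis atLeastAtMost_iff order_refl zero_le_one)
    then obtain t :: real where t: "t \<in> {0..1}" "meet_times g t = {}" by blast
    then have "delivery g t = \<infinity>" by (simp add: delivery_def)
    then have "delivery g t / ereal (Opt x y t) = \<infinity>"
      using Optpos[of t] t by simp
    then have "CR x y g = \<infinity>" using CR_ge[OF t(1), of g x y] by simp
    then show ?thesis by simp
  next
    case False
    then have ne0: "meet_times g 0 \<noteq> {}" and ne1: "meet_times g 1 \<noteq> {}" by auto
    define s0 where "s0 = Inf (meet_times g 0)"
    define s1 where "s1 = Inf (meet_times g 1)"
    have m0: "s0 \<in> meet_times g 0" using meet_Inf(1)[OF gc ne0] by (simp add: s0_def)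
    have m1: "s1 \<in> meet_times g 1" using meet_Inf(1)[OF gc ne1] by (simp add: s1_def)
    have s0p: "0 \<le> s0" and gs0: "g s0 = (0, 0)" using m0 by (auto simp: meet_times_def pkg_def)
    have s1p: "0 \<le> s1" and gs1: "g s1 = (min s1 1, 0)" using m1 by (auto simp: meet_times_def pkg_def)
    show ?thesis
    proof (cases "s0 \<le> s1")
      case True
      have "dist (g 0) (g s0) \<le> s0" using lipd[of 0 s0] s0p by simp
      then have h0: "e 0 \<le> s0" by (simp add: g0 gs0 e_def)
      have "dist (g s0) (g s1) \<le> s1 - s0" using lipd[of s0 s1] s0p s1p True by simp
      then have h1: "min s1 1 \<le> s1 - s0" using s1p by (simp add: gs0 gs1 dist_axis)
      have "delivery g 1 = ereal (s1 + 1 - min s1 1)"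
        using delivery_eq[OF gc ne1] by (simp add: s1_def)
      then have dg: "ereal (e 0 + 1) \<le> delivery g 1" using h0 h1 by simp
      have "ereal ((e 0 + 1) / e 1) \<le> CR x y g"
      proof -
        have "ereal ((e 0 + 1) / Opt x y 1) \<le> delivery g 1 / ereal (Opt x y 1)"
          by (rule ratio_ge[OF Optpos dg]) auto
        also have "\<dots> \<le> CR x y g" by (rule CR_ge) auto
        finally show ?thesis using Opt[of 1] by simp
      qed
      moreover have "CR x y (trajA0 x y) \<le> ereal ((e 0 + 1) / e 1)"
      proof (rule CR_le)
        fix t :: real assume t: "t \<in> {0..1}"
        have "delivery (trajA0 x y) t \<le> ereal (e 0 + 1)"
          using A0_bound[of t x y] t by (simp add: e_def)
        then have "delivery (trajA0 x y) t / ereal (Opt x y t) \<le> ereal ((e 0 + 1) / Opt x y t)"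
          using t by (intro ratio_le Optpos) auto
        also have "(e 0 + 1) / Opt x y t \<le> (e 0 + 1) / e 1"
        proof (rule divide_left_mono)
          show "0 \<le> e 0 + 1" by (simp add: e_def)
          show "e 1 \<le> Opt x y t" using tri[of t] Opt[of t] t by simp
          show "0 < Opt x y t * e 1" using Optpos[of t] t e1 by simp
        qed
        finally show "delivery (trajA0 x y) t / ereal (Opt x y t) \<le> ereal ((e 0 + 1) / e 1)"
          by simp
      qed
      ultimately show ?thesis by (metis order.trans)
    next
      case False
      then have lt: "s1 < s0" by simp
      have notS: "\<not> (x = 0 \<and> y = 0)"
      proof
        assume "x = 0 \<and> y = 0"
        then have "0 \<in> meet_times g 0" using g0 by (simp add: meet_times_def pkg_def)
        then have "s0 \<le> 0" using meet_Inf(2)[OF gc ne0] by (simp add: s0_def)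
        then show False using lt s1p by simp
      qed
      have s1ge: "1 \<le> s1"
      proof (rule ccontr)
        assume "\<not> 1 \<le> s1"
        then have "s1 < 1" by simp
        have "dist (g 0) (g s1) \<le> s1" using lipd[of 0 s1] s1p by simp
        then have "dist (x, y) (s1, 0) \<le> s1" using \<open>s1 < 1\<close> by (simp add: g0 gs1)
        from near_S[OF far2 s1p \<open>s1 < 1\<close> this] notS show False by simp
      qed
      have gT: "g s1 = (1, 0)" using gs1 s1ge by simp
      have "dist (g 0) (g s1) \<le> s1" using lipd[of 0 s1] s1p by simp
      then have e1s1: "e 1 \<le> s1" by (simp add: g0 gT e_def)
      define K where "K = {0..s1} \<inter> g -` ({0..1} \<times> {0})"
      have gcK: "continuous_on {0..s1} g" using gc by (rule continuous_on_subset) auto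
      have "closed K" unfolding K_def
        by (rule continuous_closed_preimage[OF gcK]) (auto intro: closed_Times)
      moreover have "bounded K" unfolding K_def by (rule bounded_subset[of "{0..s1}"]) auto
      ultimately have cK: "compact K" by (simp add: compact_eq_bounded_closed)
      have s1K: "s1 \<in> K" using s1p by (simp add: K_def gT)
      have "continuous_on K (\<lambda>s. fst (g s))"
        by (intro continuous_intros continuous_on_subset[OF gcK]) (auto simp: K_def)
      then obtain sc where scK: "sc \<in> K" and scmin: "\<And>s. s \<in> K \<Longrightarrow> fst (g sc) \<le> fst (g s)"
        using continuous_attains_inf[OF cK _] s1K by blast
      define c where "c = fst (g sc)"
      have gsc: "g sc = (c, 0)" and c01: "0 \<le> c" "c \<le> 1" and sc01: "0 \<le> sc" "sc \<le> s1"
        using scK by (auto simp: K_def c_def mem_Times_iff prod_eq_iff)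
      have cpos: "0 < c"
      proof (rule ccontr)
        assume "\<not> 0 < c"
        then have "c = 0" using c01 by simp
        then have "sc \<in> meet_times g 0" using gsc sc01 by (simp add: meet_times_def pkg_def)
        then have "s0 \<le> sc" using meet_Inf(2)[OF gc ne0] by (simp add: s0_def)
        then show False using sc01 lt by simp
      qed
      have "dist (g 0) (g sc) \<le> sc" using lipd[of 0 sc] sc01 by simp
      then have h1: "e c \<le> sc" by (simp add: g0 gsc e_def)
      have "dist (g sc) (g s1) \<le> s1 - sc" using lipd[of sc s1] sc01 by simp
      then have h2: "1 - c \<le> s1 - sc" using c01 by (simp add: gsc gT dist_axis)
      have s1f: "e c + 1 - c \<le> s1" using h1 h2 by simp
      have low: "ereal (s1 + 2 - 2 * t) \<le> delivery g t" if t: "0 \<le> t" "t < c" for t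
      proof (rule delivery_ge[OF gc])
        show "t \<le> 1" using t c01 by simp
        fix s assume sm: "s \<in> meet_times g t"
        then have s0': "0 \<le> s" and gs: "g s = (min s t, 0)" by (auto simp: meet_times_def pkg_def)
        have "s1 < s"
        proof (rule ccontr)
          assume "\<not> s1 < s"
          then have "s \<in> K" using s0' gs t c01 by (auto simp: K_def)
          then have "c \<le> min s t" using scmin[of s] gs by (simp add: c_def)
          then show False using t by simp
        qed
        then have gs': "g s = (t, 0)" using gs s1ge t c01 by simp
        have "dist (g s1) (g s) \<le> s - s1" using lipd[of s1 s] s1p \<open>s1 < s\<close> by simp
        then have "1 - t \<le> s - s1" using t c01 by (simp add: gT gs' dist_axis)
        then show "s1 + 2 - 2 * t \<le> s + 1 - min s t" using \<open>s1 < s\<close> s1ge t c01 by simp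
      qed
      define q where "q t = (e t + 1 - t + 2 - 2 * t) / (e t + 1 - t)" for t
      have fpos: "0 < e t + 1 - t" if "0 \<le> t" "t \<le> 1" for t
        using tri[OF that] e1 by linarith
      have qmono: "q t \<le> q c" if "c \<le> t" "t \<le> 1" for t
      proof -
        have p: "(1 - t) * e c \<le> (1 - c) * e t"
          using poly[OF far2 c01(1) that] by (simp add: e_def)
        have ft: "0 < e t + 1 - t" using fpos[of t] that c01 by simp
        have fc: "0 < e c + 1 - c" using fpos[of c] c01 by simp
        have "(e t + 1 - t + 2 - 2 * t) * (e c + 1 - c) \<le> (e c + 1 - c + 2 - 2 * c) * (e t + 1 - t)"
          using p by (simp add: algebra_simps)
        then show ?thesis unfolding q_def using ft fc
          by (simp add: divide_le_eq le_divide_eq mult.commute mult.left_commute frac_le_eq)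
      qed
      have CRq: "ereal (q c) \<le> CR x y g"
      proof -
        define phi where "phi t = (e c + 1 - c + 2 - 2 * t) / (dist (x, y) (t, 0::real) + 1 - t)" for t
        have "(phi \<longlongrightarrow> phi c) (at_left c)"
          unfolding phi_def using fpos[of c] c01
          by (intro tendsto_intros) (auto simp: e_def)
        then have lim: "((\<lambda>t. ereal (phi t)) \<longlongrightarrow> ereal (phi c)) (at_left c)" by simp
        have ev: "eventually (\<lambda>t. ereal (phi t) \<le> CR x y g) (at_left c)"
          unfolding eventually_at_left_field
        proof (intro exI[of _ 0] conjI allI impI)
          show "0 < c" by (rule cpos)
          fix t :: real assume t: "0 < t" "t < c"
          have t01: "0 \<le> t" "t \<le> 1" using t c01 by auto
          have "phi t \<le> (s1 + 2 - 2 * t) / Opt x y t"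
            unfolding phi_def Opt[OF t01] e_def[symmetric]
            using s1f fpos[OF t01] by (intro divide_right_mono) auto
          then have "ereal (phi t) \<le> ereal ((s1 + 2 - 2 * t) / Opt x y t)" by simp
          also have "\<dots> \<le> delivery g t / ereal (Opt x y t)"
            by (rule ratio_ge[OF Optpos[OF t01] low]) (use t in auto)
          also have "\<dots> \<le> CR x y g" by (rule CR_ge) (use t01 in auto)
          finally show "ereal (phi t) \<le> CR x y g" .
        qed
        have "ereal (phi c) \<le> CR x y g"
          by (rule tendsto_upperbound[OF lim ev]) simp
        moreover have "phi c = q c" by (simp add: phi_def q_def e_def)
        ultimately show ?thesis by simp
      qed
      have "CR x y (trajA1 x y) \<le> CR x y g"
      proof (rule CR_le)
        fix t :: real assume t: "t \<in> {0..1}"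
        then have t01: "0 \<le> t" "t \<le> 1" by auto
        have dA: "delivery (trajA1 x y) t \<le> ereal (e 1 + 2 - 2 * t)"
          using A1_bound[OF t01 far] by (simp add: e_def)
        show "delivery (trajA1 x y) t / ereal (Opt x y t) \<le> CR x y g"
        proof (cases "t < c")
          case True
          have "delivery (trajA1 x y) t \<le> delivery g t"
            using dA low[OF t01(1) True] e1s1 by (meson ereal_less_eq(3) order.trans add_right_mono diff_right_mono)
          then have "delivery (trajA1 x y) t / ereal (Opt x y t) \<le> delivery g t / ereal (Opt x y t)"
            using Optpos[OF t01] by (intro ereal_divide_right_mono) auto
          also have "\<dots> \<le> CR x y g" by (rule CR_ge[OF t])
          finally show ?thesis .
        next
          case False
          have "delivery (trajA1 x y) t / ereal (Opt x y t) \<le> ereal ((e 1 + 2 - 2 * t) / Opt x y t)"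
            by (rule ratio_le[OF Optpos[OF t01] dA])
          also have "(e 1 + 2 - 2 * t) / Opt x y t \<le> q t"
            unfolding q_def Opt[OF t01] using tri[OF t01] fpos[OF t01]
            by (intro divide_right_mono) auto
          also have "q t \<le> q c" using qmono False t01 by simp
          finally have "delivery (trajA1 x y) t / ereal (Opt x y t) \<le> ereal (q c)" by simp
          also have "\<dots> \<le> CR x y g" by (rule CRq)
          finally show ?thesis .
        qed
      qed
      then show ?thesis by simp
    qed
  qed
qed

end
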